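(* There exists a family $\mathcal{T}\subset\mathcal{L}$ with $|\mathcal{T}|=2^{\mathfrak{c}}$ such that for every $\tau\in\mathcal{T}$ the space $(\mathbb{R},\tau)$ is a completely normal Baire space, and for distinct $\tau,\tau'\in\mathcal{T}$ the spaces $(\mathbb{R},\tau)$ and $(\mathbb{R},\tau')$ are not homeomorphic.
   Context: $\mathfrak{c}=|\mathbb{R}|$. $\eta$ denotes the Euclidean topology on $\mathbb{R}$. $\mathcal{L}$ denotes the family of all Hausdorff topologies $\tau$ on the set $\mathbb{R}$ with $\tau\subset\eta$ (i.e. coarser than the Euclidean topology). *)

theory Defs
  imports "HOL-Analysis.Analysis" "HOL-Library.Equipollence"
begin

text \<open>The family L: Hausdorff topologies on the set of reals coarser than the Euclidean topology.\<close>
definition coarser_Hausdorff_topologies :: "real topology set" where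
  "coarser_Hausdorff_topologies =
     {\<tau>. topspace \<tau> = UNIV \<and> Hausdorff_space \<tau> \<and> (\<forall>U. openin \<tau> U \<longrightarrow> open U)}"

definition completely_normal_space :: "'a topology \<Rightarrow> bool" where
  "completely_normal_space X \<longleftrightarrow> (\<forall>S. S \<subseteq> topspace X \<longrightarrow> normal_space (subtopology X S))"

definition Baire_space :: "'a topology \<Rightarrow> bool" where
  "Baire_space X \<longleftrightarrow>
     (\<forall>\<U>. countable \<U> \<and> (\<forall>U\<in>\<U>. openin X U \<and> X closure_of U = topspace X)
        \<longrightarrow> X closure_of (topspace X \<inter> \<Inter>\<U>) = topspace X)"

end

theory Submission
  imports Defs
begin


definition SS :: "real \<Rightarrow> (nat \<times> int) set" where
  "SS r = range (\<lambda>k. (k, \<lfloor>2^k * r\<rfloor>))"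

definition dd :: "nat \<times> int \<Rightarrow> real" where
  "dd p = real (to_nat p) + 1"

definition opA :: "real set \<Rightarrow> real set \<Rightarrow> bool" where
  "opA A U \<longleftrightarrow> open U \<and> (0 \<in> U \<longrightarrow> (\<exists>\<delta>>0. \<exists>E K. finite E \<and> E \<inter> A = {} \<and> finite K \<and>
      ball 0 \<delta> \<subseteq> U \<and> (\<forall>p. p \<notin> K \<longrightarrow> (\<forall>r\<in>E. p \<notin> SS r) \<longrightarrow> ball (dd p) \<delta> \<subseteq> U)))"

definition tau :: "real set \<Rightarrow> real topology" where
  "tau A = topology (opA A)"

lemma istop_opA: "istopology (opA A)"
  unfolding istopology_def
proof (intro conjI allI impI ballI)
  fix S T assume S: "opA A S" and T: "opA A T"
  show "opA A (S \<inter> T)"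
    unfolding opA_def
  proof (intro conjI impI)
    show "open (S \<inter> T)" using S T by (auto simp: opA_def)
    assume "0 \<in> S \<inter> T"
    then obtain d1 E1 K1 d2 E2 K2 where 1: "d1>0" "finite E1" "E1 \<inter> A = {}" "finite K1" "ball 0 d1 \<subseteq> S"
      "\<forall>p. p \<notin> K1 \<longrightarrow> (\<forall>r\<in>E1. p \<notin> SS r) \<longrightarrow> ball (dd p) d1 \<subseteq> S"
      and 2: "d2>0" "finite E2" "E2 \<inter> A = {}" "finite K2" "ball 0 d2 \<subseteq> T"
      "\<forall>p. p \<notin> K2 \<longrightarrow> (\<forall>r\<in>E2. p \<notin> SS r) \<longrightarrow> ball (dd p) d2 \<subseteq> T"
      using S T unfolding opA_def by (metis IntD1 IntD2)
    show "\<exists>\<delta>>0. \<exists>E K. finite E \<and> E \<inter> A = {} \<and> finite K \<and>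
      ball 0 \<delta> \<subseteq> S \<inter> T \<and> (\<forall>p. p \<notin> K \<longrightarrow> (\<forall>r\<in>E. p \<notin> SS r) \<longrightarrow> ball (dd p) \<delta> \<subseteq> S \<inter> T)"
    proof (intro exI conjI)
      show "min d1 d2 > 0" using 1 2 by simp
      show "finite (E1 \<union> E2)" "(E1 \<union> E2) \<inter> A = {}" "finite (K1 \<union> K2)" using 1 2 by auto
      show "ball 0 (min d1 d2) \<subseteq> S \<inter> T" using 1 2 by auto
      show "\<forall>p. p \<notin> K1 \<union> K2 \<longrightarrow> (\<forall>r\<in>E1 \<union> E2. p \<notin> SS r) \<longrightarrow> ball (dd p) (min d1 d2) \<subseteq> S \<inter> T"
        using 1(6) 2(6) by fastforce
    qed
  qed
next
  fix K assume K: "\<forall>S\<in>K. opA A S"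
  show "opA A (\<Union>K)"
    unfolding opA_def
  proof (intro conjI impI)
    show "open (\<Union>K)" using K by (auto simp: opA_def)
    assume "0 \<in> \<Union>K"
    then obtain S where "S \<in> K" "0 \<in> S" by auto
    then show "\<exists>\<delta>>0. \<exists>E Ka. finite E \<and> E \<inter> A = {} \<and> finite Ka \<and>
      ball 0 \<delta> \<subseteq> \<Union>K \<and> (\<forall>p. p \<notin> Ka \<longrightarrow> (\<forall>r\<in>E. p \<notin> SS r) \<longrightarrow> ball (dd p) \<delta> \<subseteq> \<Union>K)"
      using K unfolding opA_def by (meson Union_upper order_trans)
  qed
qed

lemma openin_tau: "openin (tau A) U \<longleftrightarrow> opA A U"
  by (simp add: tau_def istop_opA)

lemma topspace_tau [simp]: "topspace (tau A) = UNIV"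
proof -
  have "opA A UNIV" unfolding opA_def
    by (rule conjI, simp, rule impI, rule exI[of _ 1], rule conjI, simp, rule exI[of _ "{}"], rule exI[of _ "{}"]) auto
  then show ?thesis by (metis openin_subset openin_tau top.extremum_unique)
qed

lemma openin_tau_open: "openin (tau A) U \<Longrightarrow> open U"
  by (simp add: openin_tau opA_def)

lemma openin_tau_away: "open U \<Longrightarrow> 0 \<notin> U \<Longrightarrow> openin (tau A) U"
  by (simp add: openin_tau opA_def)

lemma finite_dd_le: "finite {p. dd p \<le> M}"
proof -
  have "{p. dd p \<le> M} \<subseteq> to_nat -` {..nat \<lceil>M\<rceil>}"
    by (auto simp: dd_def) linarith
  moreover have "finite (to_nat -` {..nat \<lceil>M\<rceil>} :: (nat \<times> int) set)"
    by (rule finite_vimageI) (auto simp: inj_to_nat)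
  ultimately show ?thesis by (rule finite_subset)
qed

lemma dd_ge1: "dd p \<ge> 1"
  by (simp add: dd_def)

lemma dd_dist: "p \<noteq> q \<Longrightarrow> \<bar>dd p - dd q\<bar> \<ge> 1"
proof -
  assume "p \<noteq> q"
  then have "to_nat p \<noteq> to_nat q" by (meson inj_eq inj_to_nat)
  then show ?thesis unfolding dd_def by linarith
qed

lemma compact_compl_open:
  assumes "compact C" "0 \<notin> C"
  shows "openin (tau A) (- C)"
proof -
  obtain M where M: "\<And>x. x \<in> C \<Longrightarrow> \<bar>x\<bar> \<le> M"
    using compact_imp_bounded[OF assms(1)] unfolding bounded_iff by auto
  have "open (- C)" using assms compact_imp_closed by blast
  then obtain e where e: "e > 0" "ball 0 e \<subseteq> - C"
    using assms(2) open_contains_ball by blast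
  show ?thesis unfolding openin_tau opA_def
  proof (intro conjI impI)
    show "open (- C)" by fact
    show "\<exists>\<delta>>0. \<exists>E K. finite E \<and> E \<inter> A = {} \<and> finite K \<and>
      ball 0 \<delta> \<subseteq> - C \<and> (\<forall>p. p \<notin> K \<longrightarrow> (\<forall>r\<in>E. p \<notin> SS r) \<longrightarrow> ball (dd p) \<delta> \<subseteq> - C)"
    proof (intro exI conjI allI impI)
      show "min e 1 > 0" using e by simp
      show "finite ({}::real set)" "{} \<inter> A = {}" by auto
      show "finite {p. dd p \<le> M + 1}" by (rule finite_dd_le)
      show "ball 0 (min e 1) \<subseteq> - C" using e by auto
      fix p assume "p \<notin> {p. dd p \<le> M + 1}"
      then have "dd p > M + 1" by simp
      then show "ball (dd p) (min e 1) \<subseteq> - C"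
        using M by (force simp: dist_real_def)
    qed
  qed
qed

lemma Hausdorff_tau: "Hausdorff_space (tau A)"
  unfolding Hausdorff_space_def
proof (intro allI impI)
  fix x y :: real assume "x \<in> topspace (tau A) \<and> y \<in> topspace (tau A) \<and> x \<noteq> y"
  then have xy: "x \<noteq> y" by simp
  have sep0: "\<exists>U V. openin (tau A) U \<and> openin (tau A) V \<and> 0 \<in> U \<and> z \<in> V \<and> disjnt U V"
    if "z \<noteq> 0" for z :: real
  proof (intro exI conjI)
    let ?r = "\<bar>z\<bar>/2"
    show "openin (tau A) (- cball z ?r)"
      by (rule compact_compl_open) (use that in auto)
    show "openin (tau A) (ball z ?r)"
      by (rule openin_tau_away) (use that in auto)
    show "0 \<in> - cball z ?r" using that by auto
    show "z \<in> ball z ?r" using that by auto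
    show "disjnt (- cball z ?r) (ball z ?r)" by (auto simp: disjnt_def)
  qed
  show "\<exists>U V. openin (tau A) U \<and> openin (tau A) V \<and> x \<in> U \<and> y \<in> V \<and> disjnt U V"
  proof (cases "x = 0")
    case True then show ?thesis using sep0 xy by auto
  next
    case xn: False
    show ?thesis
    proof (cases "y = 0")
      case True then show ?thesis using sep0[OF xn] by (metis disjnt_sym)
    next
      case yn: False
      let ?r = "min \<bar>x - y\<bar> (min \<bar>x\<bar> \<bar>y\<bar>) / 2"
      show ?thesis
      proof (intro exI conjI)
        show "openin (tau A) (ball x ?r)" "openin (tau A) (ball y ?r)"
          by (rule openin_tau_away; auto simp: dist_real_def)+
        show "x \<in> ball x ?r" "y \<in> ball y ?r" using xy xn yn by auto
        show "disjnt (ball x ?r) (ball y ?r)"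
          unfolding disjnt_def by (rule disjoint_ballI) (auto simp: dist_real_def)
      qed
    qed
  qed
qed

lemma closedin_tau2: "openin (tau A) (- C) \<Longrightarrow> closedin (tau A) C"
  unfolding closedin_def by (simp add: Compl_eq_Diff_UNIV)

lemma closedin_tau: "compact C \<Longrightarrow> 0 \<notin> C \<Longrightarrow> closedin (tau A) C"
  by (rule closedin_tau2, rule compact_compl_open)

lemma infdist_lessE:
  fixes X :: "real set"
  assumes "X \<noteq> {}" "infdist y X < e"
  obtains x where "x \<in> X" "dist y x < e"
proof -
  have h1: "Inf ((\<lambda>a. dist y a) ` X) < e" using assms(2) infdist_notempty[OF assms(1)] by simp
  have ne: "(\<lambda>a. dist y a) ` X \<noteq> {}" using assms(1) by simp
  have "\<exists>t\<in>(\<lambda>a. dist y a) ` X. t < e" by (rule cInf_lessD[OF ne h1])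
  then show ?thesis using that by auto
qed

lemma regular_tau: "regular_space (tau A)"
  unfolding neighbourhood_base_of_closedin[symmetric] neighbourhood_base_of
proof (intro allI impI)
  fix W x assume Wx: "openin (tau A) W \<and> x \<in> W"
  then have W: "opA A W" and xW: "x \<in> W" by (auto simp: openin_tau)
  show "\<exists>U V. openin (tau A) U \<and> closedin (tau A) V \<and> x \<in> U \<and> U \<subseteq> V \<and> V \<subseteq> W"
  proof (cases "x = 0")
    case xn: False
    have "open W" using W by (simp add: opA_def)
    then obtain r where r: "r > 0" "cball x r \<subseteq> W" using xW open_contains_cball by blast
    let ?r = "min r (\<bar>x\<bar>/2)"
    show ?thesis
    proof (intro exI conjI)
      show "openin (tau A) (ball x ?r)" by (rule openin_tau_away) (use xn in \<open>auto simp: dist_real_def\<close>)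
      show "closedin (tau A) (cball x ?r)" by (rule closedin_tau) (use xn in \<open>auto simp: dist_real_def\<close>)
      show "x \<in> ball x ?r" using xn r(1) by simp
      show "ball x ?r \<subseteq> cball x ?r" by auto
      show "cball x ?r \<subseteq> W" using r by auto
    qed
  next
    case True
    then obtain \<delta> E K where dEK: "\<delta>>0" "finite E" "E \<inter> A = {}" "finite K" "ball 0 \<delta> \<subseteq> W"
      "\<And>p. p \<notin> K \<Longrightarrow> (\<forall>r\<in>E. p \<notin> SS r) \<Longrightarrow> ball (dd p) \<delta> \<subseteq> W"
      using W xW unfolding opA_def by blast
    define X where "X = insert 0 (dd ` {p. p \<notin> K \<and> (\<forall>r\<in>E. p \<notin> SS r)})"
    have Xne: "X \<noteq> {}" by (simp add: X_def)
    define U where "U = {y. infdist y X < \<delta>/2}"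
    define V where "V = {y. infdist y X \<le> \<delta>/2}"
    have cont: "continuous_on UNIV (\<lambda>y. infdist y X)"
      by (intro continuous_intros)
    have oU: "open U" unfolding U_def
      by (rule open_Collect_less) (auto intro: continuous_intros)
    have eqV: "- V = {y. \<delta>/2 < infdist y X}" by (auto simp: V_def)
    have oV: "open (- V)" unfolding eqV
      by (rule open_Collect_less) (auto intro: continuous_intros)
    show ?thesis
    proof (intro exI conjI)
      show "openin (tau A) U" unfolding openin_tau opA_def
      proof (intro conjI impI)
        show "open U" by fact
        show "\<exists>\<delta>'>0. \<exists>E' K'. finite E' \<and> E' \<inter> A = {} \<and> finite K' \<and>
          ball 0 \<delta>' \<subseteq> U \<and> (\<forall>p. p \<notin> K' \<longrightarrow> (\<forall>r\<in>E'. p \<notin> SS r) \<longrightarrow> ball (dd p) \<delta>' \<subseteq> U)"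
        proof (intro exI conjI allI impI)
          show "\<delta>/2 > 0" using dEK by simp
          show "finite E" "E \<inter> A = {}" "finite K" by (use dEK in auto)
          show "ball 0 (\<delta>/2) \<subseteq> U"
          proof
            fix y :: real assume y: "y \<in> ball 0 (\<delta>/2)"
            have "infdist y X \<le> dist y 0" by (rule infdist_le) (simp add: X_def)
            then show "y \<in> U" using y by (simp add: U_def dist_commute)
          qed
          fix p assume "p \<notin> K" "\<forall>r\<in>E. p \<notin> SS r"
          then have "dd p \<in> X" by (simp add: X_def)
          show "ball (dd p) (\<delta>/2) \<subseteq> U"
          proof
            fix y assume y: "y \<in> ball (dd p) (\<delta>/2)"
            have "infdist y X \<le> dist y (dd p)" by (rule infdist_le) fact
            then show "y \<in> U" using y by (simp add: U_def dist_commute)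
          qed
        qed
      qed
      show "closedin (tau A) V"
      proof (rule closedin_tau2)
        show "openin (tau A) (- V)" by (rule openin_tau_away) (use oV dEK(1) in \<open>auto simp: V_def X_def\<close>)
      qed
      show "x \<in> U" using True dEK by (simp add: U_def X_def)
      show "U \<subseteq> V" by (auto simp: U_def V_def)
      show "V \<subseteq> W"
      proof
        fix y assume "y \<in> V"
        then have "infdist y X < \<delta>" using dEK by (simp add: V_def)
        then obtain z where z: "z \<in> X" "dist y z < \<delta>" using infdist_lessE Xne by blast
        show "y \<in> W"
        proof (cases "z = 0")
          case True then show ?thesis using z dEK(5) by (auto simp: dist_commute)
        next
          case False
          then obtain p where p: "p \<notin> K" "\<forall>r\<in>E. p \<notin> SS r" "z = dd p" using z by (auto simp: X_def)
          have "y \<in> ball (dd p) \<delta>" using z p by (simp add: dist_commute)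
          then show ?thesis using dEK(6)[OF p(1,2)] by blast
        qed
      qed
    qed
  qed
qed



lemma open_minus0_ne:
  fixes T :: "real set"
  assumes "open T" "T \<noteq> {}"
  shows "T - {0} \<noteq> {}"
proof -
  obtain x where x: "x \<in> T" using assms by auto
  then obtain e where e: "e > 0" "ball x e \<subseteq> T" using assms(1) open_contains_ball by blast
  show ?thesis
  proof (cases "x = 0")
    case True
    then have "e/2 \<in> ball x e" using e by (simp add: dist_real_def)
    then have "e/2 \<in> T" using e by blast
    moreover have "e/2 \<noteq> 0" using e by simp
    ultimately show ?thesis by blast
  next
    case False then show ?thesis using x by auto
  qed
qed

lemma tau_dense_imp_dense:
  assumes "tau A closure_of U = UNIV"
  shows "closure U = UNIV"
proof -
  have "euclidean closure_of U = topspace euclidean"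
    unfolding dense_intersects_open
  proof (intro allI impI)
    fix T :: "real set" assume "openin euclidean T \<and> T \<noteq> {}"
    then have T: "open T" "T \<noteq> {}" by auto
    have "openin (tau A) (T - {0})" by (rule openin_tau_away) (use T in auto)
    moreover have "T - {0} \<noteq> {}" using open_minus0_ne T by blast
    ultimately have "U \<inter> (T - {0}) \<noteq> {}"
      using assms unfolding dense_intersects_open[of "tau A", simplified] by blast
    then show "U \<inter> T \<noteq> {}" by blast
  qed
  then show ?thesis by simp
qed

lemma dense_imp_tau_dense:
  assumes "closure U = UNIV"
  shows "tau A closure_of U = UNIV"
proof -
  have "euclidean closure_of U = topspace euclidean" using assms by simp
  then have *: "\<And>T. open T \<Longrightarrow> T \<noteq> {} \<Longrightarrow> U \<inter> T \<noteq> {}"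
    unfolding dense_intersects_open by auto
  have "tau A closure_of U = topspace (tau A)"
    unfolding dense_intersects_open using * openin_tau_open by blast
  then show ?thesis by simp
qed

lemma Baire_tau: "Baire_space (tau A)"
  unfolding Baire_space_def
proof (intro allI impI)
  fix \<U> assume H: "countable \<U> \<and> (\<forall>U\<in>\<U>. openin (tau A) U \<and> tau A closure_of U = topspace (tau A))"
  have "(UNIV::real set) \<subseteq> closure (\<Inter>\<U>)"
  proof (rule Baire)
    show "closed (UNIV::real set)" "countable \<U>" using H by auto
    fix T assume "T \<in> \<U>"
    then have "openin (tau A) T" "tau A closure_of T = UNIV" using H by auto
    then show "openin (top_of_set UNIV) T \<and> UNIV \<subseteq> closure T"
      using openin_tau_open tau_dense_imp_dense by auto
  qed
  then show "tau A closure_of (topspace (tau A) \<inter> \<Inter>\<U>) = topspace (tau A)"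
    using dense_imp_tau_dense by auto
qed

lemma Lindelof_sub_tau: "Lindelof_space (subtopology (tau A) S)"
  unfolding Lindelof_space_def
proof (intro allI impI)
  fix \<U> assume H: "(\<forall>U\<in>\<U>. openin (subtopology (tau A) S) U) \<and> \<Union>\<U> = topspace (subtopology (tau A) S)"
  then have "\<forall>U\<in>\<U>. \<exists>T. openin (tau A) T \<and> U = T \<inter> S" by (simp add: openin_subtopology)
  then have "\<exists>T. \<forall>U\<in>\<U>. openin (tau A) (T U) \<and> U = T U \<inter> S" by (rule bchoice)
  then obtain T where T0: "\<forall>U\<in>\<U>. openin (tau A) (T U) \<and> U = T U \<inter> S" by blast
  then have T: "\<And>U. U \<in> \<U> \<Longrightarrow> openin (tau A) (T U) \<and> U = T U \<inter> S" by blast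
  have op: "\<And>V. V \<in> T ` \<U> \<Longrightarrow> open V" using T openin_tau_open by blast
  have US: "\<Union>\<U> = S" using H by simp
  obtain \<F> where F: "\<F> \<subseteq> T ` \<U>" "countable \<F>" "\<Union>\<F> = \<Union>(T ` \<U>)"
    by (rule Lindelof[OF op])
  define \<V> where "\<V> = inv_into \<U> T ` \<F>"
  show "\<exists>\<V>. countable \<V> \<and> \<V> \<subseteq> \<U> \<and> \<Union>\<V> = topspace (subtopology (tau A) S)"
  proof (intro exI conjI)
    show "countable \<V>" using F by (simp add: \<V>_def)
    show "\<V> \<subseteq> \<U>" using F by (auto simp: \<V>_def inv_into_into)
    show "\<Union>\<V> = topspace (subtopology (tau A) S)"
    proof
      show "\<Union>\<V> \<subseteq> topspace (subtopology (tau A) S)"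
        using \<open>\<V> \<subseteq> \<U>\<close> H by auto
      show "topspace (subtopology (tau A) S) \<subseteq> \<Union>\<V>"
      proof
        fix x assume "x \<in> topspace (subtopology (tau A) S)"
        then have xS: "x \<in> S" by simp
        then obtain U where U: "U \<in> \<U>" "x \<in> U" using US by auto
        then have "x \<in> \<Union>(T ` \<U>)" using T by blast
        then have "x \<in> \<Union>\<F>" using F(3) by simp
        then obtain t where t: "t \<in> \<F>" "x \<in> t" by blast
        have tT: "t \<in> T ` \<U>" using t F by auto
        let ?v = "inv_into \<U> T t"
        have "?v \<in> \<U>" "T ?v = t" using tT by (auto simp: inv_into_into f_inv_into_f)
        then have "x \<in> ?v" using T[of ?v] t xS by auto
        then show "x \<in> \<Union>\<V>" using t by (auto simp: \<V>_def)
      qed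
    qed
  qed
qed

lemma completely_normal_tau: "completely_normal_space (tau A)"
  unfolding completely_normal_space_def
  by (intro allI impI regular_Lindelof_imp_normal_space regular_space_subtopology regular_tau Lindelof_sub_tau)



lemma SS_infinite: "infinite (SS r)"
proof -
  have "inj (\<lambda>k. (k, \<lfloor>2^k * r\<rfloor>))" by (auto simp: inj_on_def)
  then show ?thesis unfolding SS_def by (rule range_inj_infinite)
qed

lemma floor_eq_close: "\<lfloor>a::real\<rfloor> = \<lfloor>b\<rfloor> \<Longrightarrow> \<bar>a - b\<bar> < 1"
proof -
  assume h: "\<lfloor>a\<rfloor> = \<lfloor>b\<rfloor>"
  have "of_int \<lfloor>a\<rfloor> \<le> a" "a < of_int \<lfloor>a\<rfloor> + 1" "of_int \<lfloor>b\<rfloor> \<le> b" "b < of_int \<lfloor>b\<rfloor> + 1"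
    by linarith+
  then show ?thesis using h by linarith
qed

lemma SS_almost_disjoint:
  assumes "r \<noteq> s"
  shows "finite (SS r \<inter> SS s)"
proof -
  define c where "c = \<bar>r - s\<bar>"
  have c: "c > 0" using assms by (simp add: c_def)
  have "SS r \<inter> SS s \<subseteq> (\<lambda>k. (k, \<lfloor>2^k * r\<rfloor>)) ` {k. \<lfloor>2^k * r\<rfloor> = \<lfloor>2^k * s\<rfloor>}"
    by (auto simp: SS_def)
  moreover have "finite {k::nat. \<lfloor>2^k * r\<rfloor> = \<lfloor>2^k * s\<rfloor>}"
  proof (rule finite_subset)
    show "{k::nat. \<lfloor>2^k * r\<rfloor> = \<lfloor>2^k * s\<rfloor>} \<subseteq> {k. real k * c < 1}"
    proof
      fix k :: nat assume "k \<in> {k::nat. \<lfloor>2^k * r\<rfloor> = \<lfloor>2^k * s\<rfloor>}"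
      then have "\<bar>2^k * r - 2^k * s\<bar> < 1" using floor_eq_close by simp
      then have "2^k * c < 1" by (simp add: c_def abs_mult flip: right_diff_distrib)
      moreover have "real k \<le> 2^k"
      proof -
        have "k < 2^k" by simp
        then have "real k < real (2^k)" by linarith
        then show ?thesis by simp
      qed
      moreover have "real k * c \<le> 2^k * c" using c \<open>real k \<le> 2^k\<close> by (intro mult_right_mono) auto
      ultimately have "real k * c < 1" by linarith
      then show "k \<in> {k. real k * c < 1}" by simp
    qed
    show "finite {k::nat. real k * c < 1}"
    proof (rule finite_subset)
      show "{k::nat. real k * c < 1} \<subseteq> {..nat \<lceil>1/c\<rceil>}"
      proof
        fix k :: nat assume "k \<in> {k. real k * c < 1}"
        then have "real k < 1/c" using c by (simp add: field_simps)
        then show "k \<in> {..nat \<lceil>1/c\<rceil>}" by simp linarith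
      qed
    qed simp
  qed
  ultimately show ?thesis using finite_subset finite_imageI by blast
qed

lemma tau_inj: "inj tau"
proof -
  have main: "tau A \<noteq> tau B" if rB: "r \<in> B" and rA: "r \<notin> A" for A B r
  proof -
    define U0 where "U0 = ball 0 (1/2) \<union> (\<Union>p\<in>{p. p \<notin> SS r}. ball (dd p) (1/2))"
    have "opA A U0" unfolding opA_def
    proof (intro conjI impI)
      show "open U0" unfolding U0_def by (intro open_Un open_UN ballI open_ball)
      show "\<exists>\<delta>>0. \<exists>E K. finite E \<and> E \<inter> A = {} \<and> finite K \<and>
        ball 0 \<delta> \<subseteq> U0 \<and> (\<forall>p. p \<notin> K \<longrightarrow> (\<forall>r\<in>E. p \<notin> SS r) \<longrightarrow> ball (dd p) \<delta> \<subseteq> U0)"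
      proof (intro exI conjI allI impI)
        show "(1/2::real) > 0" by simp
        show "finite {r}" "{r} \<inter> A = {}" "finite {}" using rA by auto
        show "ball 0 (1/2) \<subseteq> U0" by (auto simp: U0_def)
        fix p assume "p \<notin> {}" "\<forall>r'\<in>{r}. p \<notin> SS r'"
        then show "ball (dd p) (1/2) \<subseteq> U0" by (auto simp: U0_def)
      qed
    qed
    moreover have "\<not> opA B U0"
    proof
      assume "opA B U0"
      moreover have "0 \<in> U0" by (simp add: U0_def)
      ultimately obtain \<delta> E K where dEK: "\<delta>>0" "finite E" "E \<inter> B = {}" "finite K"
        "\<And>p. p \<notin> K \<Longrightarrow> (\<forall>s\<in>E. p \<notin> SS s) \<Longrightarrow> ball (dd p) \<delta> \<subseteq> U0"
        unfolding opA_def by blast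
      have rE: "r \<notin> E" using dEK(3) rB by auto
      have "\<forall>s\<in>E. finite (SS r \<inter> SS s)" using SS_almost_disjoint rE by metis
      then have fin: "finite (K \<union> (\<Union>s\<in>E. SS r \<inter> SS s))"
        using dEK(2,4) by (intro finite_UnI finite_UN_I) auto
      have "infinite (SS r - (K \<union> (\<Union>s\<in>E. SS r \<inter> SS s)))"
        using SS_infinite fin by (rule Diff_infinite_finite[rotated])
      then have "SS r - (K \<union> (\<Union>s\<in>E. SS r \<inter> SS s)) \<noteq> {}" by (rule infinite_imp_nonempty)
      then obtain p where p0: "p \<in> SS r - (K \<union> (\<Union>s\<in>E. SS r \<inter> SS s))" by blast
      then have p: "p \<in> SS r" "p \<notin> K" "\<forall>s\<in>E. p \<notin> SS s" by auto
      then have "dd p \<in> U0" using dEK(5)[of p] dEK(1) by auto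
      moreover have "dd p \<notin> ball 0 (1/2)" using dd_ge1[of p] by (simp add: dist_real_def)
      ultimately obtain q where q: "q \<notin> SS r" "dd p \<in> ball (dd q) (1/2)" by (auto simp: U0_def)
      then have "p \<noteq> q" using p by auto
      then have "\<bar>dd p - dd q\<bar> \<ge> 1" by (rule dd_dist)
      moreover have "\<bar>dd q - dd p\<bar> < 1/2" using q by (simp add: dist_real_def)
      ultimately show False by (simp add: abs_minus_commute)
    qed
    ultimately show ?thesis by (metis openin_tau)
  qed
  show ?thesis
  proof (rule injI)
    fix A B assume "tau A = tau B"
    then show "A = B" using main by (metis subset_antisym subsetI)
  qed
qed

lemma tau_in_L: "tau A \<in> coarser_Hausdorff_topologies"
  unfolding coarser_Hausdorff_topologies_def using Hausdorff_tau openin_tau_open by auto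

lemma Rats_dense_tau: "tau A closure_of \<rat> = UNIV"
  by (rule dense_imp_tau_dense) (rule Rats_closure_real)

lemma opA_UNIV: "opA UNIV U \<Longrightarrow> opA A U"
  unfolding opA_def
proof (elim conjE, intro conjI impI)
  assume "open U" "0 \<in> U \<longrightarrow> (\<exists>\<delta>>0. \<exists>E K. finite E \<and> E \<inter> UNIV = {} \<and> finite K \<and>
      ball 0 \<delta> \<subseteq> U \<and> (\<forall>p. p \<notin> K \<longrightarrow> (\<forall>r\<in>E. p \<notin> SS r) \<longrightarrow> ball (dd p) \<delta> \<subseteq> U))" "0 \<in> U"
  then obtain \<delta> E K where dpos: "\<delta>>0" "finite E" "E \<inter> UNIV = {}" "finite K"
      "ball 0 \<delta> \<subseteq> U" "(\<forall>p. p \<notin> K \<longrightarrow> (\<forall>r\<in>E. p \<notin> SS r) \<longrightarrow> ball (dd p) \<delta> \<subseteq> U)"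
    by blast
  then show "\<exists>\<delta>>0. \<exists>E K. finite E \<and> E \<inter> A = {} \<and> finite K \<and>
      ball 0 \<delta> \<subseteq> U \<and> (\<forall>p. p \<notin> K \<longrightarrow> (\<forall>r\<in>E. p \<notin> SS r) \<longrightarrow> ball (dd p) \<delta> \<subseteq> U)"
    by (intro exI[of _ \<delta>] conjI[OF dpos(1)] exI[of _ E] exI[of _ K]) auto
qed assumption

lemma tau_UNIV_coarser: "openin (tau UNIV) U \<Longrightarrow> openin (tau A) U"
  unfolding openin_tau by (rule opA_UNIV)

lemma homeo_into_UNIV:
  assumes "continuous_map (tau A) (tau B) h"
  shows "continuous_map (tau A) (tau UNIV) h"
  using assms unfolding continuous_map_def using tau_UNIV_coarser by auto

lemma homeo_determines:
  assumes h: "homeomorphic_map (tau A) (tau B) h" and g: "homeomorphic_map (tau A) (tau C) g"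
    and eq: "\<And>q. q \<in> \<rat> \<Longrightarrow> h q = g q"
  shows "tau B = tau C"
proof -
  have hg: "h x = g x" for x
  proof (rule forall_in_closure_of_eq[of x "tau A" "\<rat>" "tau UNIV" h g])
    show "x \<in> tau A closure_of \<rat>" using Rats_dense_tau by simp
    show "Hausdorff_space (tau UNIV)" by (rule Hausdorff_tau)
    show "continuous_map (tau A) (tau UNIV) h" "continuous_map (tau A) (tau UNIV) g"
      using h g homeomorphic_imp_continuous_map homeo_into_UNIV by blast+
  qed (use eq in auto)
  then have hg': "h = g" by auto
  have sh: "surj h" using homeomorphic_imp_surjective_map[OF h] by simp
  have "openin (tau B) V \<longleftrightarrow> openin (tau C) V" for V
  proof -
    have V: "V = h ` (h -` V)" using sh by (simp add: surj_image_vimage_eq)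
    have "openin (tau B) V \<longleftrightarrow> openin (tau A) (h -` V)"
      using homeomorphic_map_openness[OF h, of "h -` V"] V by simp
    also have "\<dots> \<longleftrightarrow> openin (tau C) V"
      using homeomorphic_map_openness[OF g, of "h -` V"] V hg' by simp
    finally show ?thesis .
  qed
  then show ?thesis by (simp add: topology_eq)
qed



lemma inf_square_lepoll:
  assumes "infinite A"
  shows "A \<times> A \<lesssim> A"
proof -
  have "A \<times> A \<approx> A" unfolding eqpoll_def
    using card_of_ordIso card_of_Times_same_infinite[OF assms] by blast
  then show ?thesis by (rule eqpoll_imp_lepoll)
qed

lemma lepoll_total: "A \<lesssim> B \<or> B \<lesssim> A"
proof -
  show ?thesis unfolding lepoll_def
    using ordLeq_total[OF card_of_Well_order card_of_Well_order, of A B] card_of_ordLeq[of A B] card_of_ordLeq[of B A]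
    by blast
qed

lemma rep_lemma:
  fixes F :: "'a set" and rel :: "'a \<Rightarrow> 'a \<Rightarrow> bool"
  assumes FP: "F \<approx> (UNIV :: real set set)"
    and rrefl: "\<And>x. x \<in> F \<Longrightarrow> rel x x"
    and rsym: "\<And>x y. x \<in> F \<Longrightarrow> y \<in> F \<Longrightarrow> rel x y \<Longrightarrow> rel y x"
    and rtrans: "\<And>x y z. x \<in> F \<Longrightarrow> y \<in> F \<Longrightarrow> z \<in> F \<Longrightarrow> rel x y \<Longrightarrow> rel y z \<Longrightarrow> rel x z"
    and cls: "\<And>x. x \<in> F \<Longrightarrow> {y\<in>F. rel x y} \<lesssim> (UNIV::real set)"
  shows "\<exists>R \<subseteq> F. R \<approx> (UNIV :: real set set) \<and> (\<forall>x\<in>R. \<forall>y\<in>R. x \<noteq> y \<longrightarrow> \<not> rel x y)"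
proof -
  define cl where "cl x = {y\<in>F. rel x y}" for x
  define rep where "rep x = (SOME r. r \<in> cl x)" for x
  have rep_in: "rep x \<in> cl x" if "x \<in> F" for x
    unfolding rep_def by (rule someI[of _ x]) (use that rrefl in \<open>simp add: cl_def\<close>)
  then have repF: "rep x \<in> F" and rel_rep: "rel x (rep x)" if "x \<in> F" for x
    using that by (auto simp: cl_def)
  have cl_eq: "cl x = cl y" if "x \<in> F" "y \<in> F" "rel x y" for x y
    using that rsym rtrans unfolding cl_def by blast
  have rep_eq: "rep x = rep y" if "x \<in> F" "y \<in> F" "rel x y" for x y
    using cl_eq[OF that] by (simp add: rep_def)
  define R where "R = rep ` F"
  have RF: "R \<subseteq> F" using repF by (auto simp: R_def)
  have disj: "\<forall>x\<in>R. \<forall>y\<in>R. x \<noteq> y \<longrightarrow> \<not> rel x y"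
  proof (intro ballI impI notI)
    fix a b assume "a \<in> R" "b \<in> R" "a \<noteq> b" "rel a b"
    then obtain x y where xy: "x \<in> F" "y \<in> F" "a = rep x" "b = rep y" by (auto simp: R_def)
    have "rel x a" using rel_rep xy by simp
    moreover have "rel b y" using rsym[OF xy(2) repF[OF xy(2)] rel_rep[OF xy(2)]] xy by simp
    ultimately have "rel x y" using rtrans[OF xy(1) _ xy(2), of b] rtrans[OF xy(1) _ _ \<open>rel x a\<close> \<open>rel a b\<close>] xy repF by simp
    then have "a = b" using rep_eq xy by simp
    then show False using \<open>a \<noteq> b\<close> by simp
  qed
  define g where "g c = (SOME f::'a \<Rightarrow> real. inj_on f (cl c))" for c
  have g_inj: "inj_on (g c) (cl c)" if "c \<in> F" for c
  proof -
    have "\<exists>f::'a \<Rightarrow> real. inj_on f (cl c)" using cls[OF that] unfolding lepoll_def cl_def by blast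
    then show ?thesis unfolding g_def by (rule someI_ex)
  qed
  define \<phi> where "\<phi> x = (rep x, g (rep x) x)" for x
  have x_cl: "x \<in> cl (rep x)" if "x \<in> F" for x
    using rsym[OF that repF[OF that] rel_rep[OF that]] that by (simp add: cl_def)
  have "inj_on \<phi> F"
  proof (rule inj_onI)
    fix x y assume xy: "x \<in> F" "y \<in> F" "\<phi> x = \<phi> y"
    then have r: "rep x = rep y" and gg: "g (rep x) x = g (rep x) y" by (auto simp: \<phi>_def)
    have "x \<in> cl (rep x)" using x_cl xy(1) by blast
    moreover have "y \<in> cl (rep x)" using x_cl[OF xy(2)] r by simp
    ultimately
    show "x = y" using g_inj[OF repF[OF xy(1)]] gg by (auto dest: inj_onD)
  qed
  moreover have "\<phi> ` F \<subseteq> R \<times> (UNIV::real set)" by (auto simp: \<phi>_def R_def)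
  ultimately have FR: "F \<lesssim> R \<times> (UNIV::real set)" unfolding lepoll_def by blast
  have infR: "infinite (UNIV::real set)" by (simp add: infinite_UNIV_char_0)
  have "(UNIV::real set) \<lesssim> R"
  proof (rule ccontr)
    assume "\<not> (UNIV::real set) \<lesssim> R"
    then have "R \<lesssim> (UNIV::real set)" using lepoll_total by blast
    then have "R \<times> (UNIV::real set) \<lesssim> (UNIV::real set) \<times> (UNIV::real set)"
      by (rule times_lepoll_mono) simp
    also have "\<dots> \<lesssim> (UNIV::real set)" using infR by (rule inf_square_lepoll)
    finally have "F \<lesssim> (UNIV::real set)" by (rule lepoll_trans[OF FR])
    then have "(UNIV::real set set) \<lesssim> (UNIV::real set)"
      by (rule lepoll_trans1[OF eqpoll_sym[OF FP]])
    then have P: "Pow (UNIV::real set) \<lesssim> (UNIV::real set)" by (simp only: Pow_UNIV)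
    have "(UNIV::real set) \<prec> Pow (UNIV::real set)" by (rule lesspoll_Pow_self)
    then have "(UNIV::real set) \<lesssim> Pow (UNIV::real set)" "\<not> (UNIV::real set) \<approx> Pow (UNIV::real set)"
      unfolding lesspoll_def by auto
    then show False using lepoll_antisym[OF _ P] by blast
  qed
  then have "(UNIV::nat set) \<lesssim> R" using infR[unfolded infinite_le_lepoll] by (rule lepoll_trans[rotated])
  then have infRR: "infinite R" by (simp add: infinite_le_lepoll)
  have "R \<times> (UNIV::real set) \<lesssim> R \<times> R"
    by (rule times_lepoll_mono) (simp, fact)
  also have "\<dots> \<lesssim> R" using infRR by (rule inf_square_lepoll)
  finally have "F \<lesssim> R" by (rule lepoll_trans[OF FR])
  moreover have "R \<lesssim> F" using RF by (rule subset_imp_lepoll)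
  ultimately have "R \<approx> F" by (rule lepoll_antisym[rotated])
  then have "R \<approx> (UNIV::real set set)" using FP by (rule eqpoll_trans)
  then show ?thesis using RF disj by blast
qed

lemma rat_fun_lepoll: "(UNIV :: (rat \<Rightarrow> real) set) \<lesssim> (UNIV :: real set)"
proof -
  obtain \<beta> :: "nat set \<Rightarrow> real" where b: "bij_betw \<beta> UNIV UNIV"
    using nat_sets_eqpoll_reals unfolding eqpoll_def by blast
  define \<alpha> where "\<alpha> = inv \<beta>"
  have ainj: "inj \<alpha>" unfolding \<alpha>_def using b by (simp add: bij_betw_def bij_is_surj surj_imp_inj_inv)
  define \<Phi> where "\<Phi> f = {prod_encode (to_nat q, n) | q n. n \<in> \<alpha> (f q)}" for f :: "rat \<Rightarrow> real"
  have mem: "prod_encode (to_nat q, n) \<in> \<Phi> f \<longleftrightarrow> n \<in> \<alpha> (f q)" for f q n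
  proof
    assume "prod_encode (to_nat q, n) \<in> \<Phi> f"
    then obtain q' n' where "prod_encode (to_nat q, n) = prod_encode (to_nat q', n')" "n' \<in> \<alpha> (f q')"
      by (auto simp: \<Phi>_def)
    then show "n \<in> \<alpha> (f q)" by (simp add: prod_encode_eq)
  qed (auto simp: \<Phi>_def)
  have "inj \<Phi>"
  proof (rule injI)
    fix f g assume "\<Phi> f = \<Phi> g"
    then have "\<And>q n. n \<in> \<alpha> (f q) \<longleftrightarrow> n \<in> \<alpha> (g q)" using mem by metis
    then have "\<And>q. \<alpha> (f q) = \<alpha> (g q)" by blast
    then have "\<And>q. f q = g q" using ainj by (simp add: inj_eq)
    then show "f = g" by auto
  qed
  then have "(UNIV :: (rat \<Rightarrow> real) set) \<lesssim> (UNIV :: nat set set)" unfolding lepoll_def by blast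
  also have "\<dots> \<lesssim> (UNIV :: real set)" using nat_sets_eqpoll_reals by (rule eqpoll_imp_lepoll)
  finally show ?thesis .
qed

lemma class_bound:
  "{y \<in> range tau. tau A homeomorphic_space y} \<lesssim> (UNIV::real set)"
proof -
  define H where "H y = (SOME h::real \<Rightarrow> real. homeomorphic_map (tau A) y h)" for y :: "real topology"
  define \<psi> where "\<psi> y = (\<lambda>q::rat. H y (of_rat q))" for y
  have H: "homeomorphic_map (tau A) y (H y)" if "tau A homeomorphic_space y" for y
    using that unfolding homeomorphic_space H_def by (rule someI_ex)
  have "inj_on \<psi> {y \<in> range tau. tau A homeomorphic_space y}"
  proof (rule inj_onI)
    fix y z assume y: "y \<in> {y \<in> range tau. tau A homeomorphic_space y}"
      and z: "z \<in> {y \<in> range tau. tau A homeomorphic_space y}" and e: "\<psi> y = \<psi> z"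
    obtain B C where BC: "y = tau B" "z = tau C" using y z by auto
    have "H y q = H z q" if "q \<in> \<rat>" for q
    proof -
      obtain r where "q = of_rat r" using \<open>q \<in> \<rat>\<close> by (auto elim: Rats_cases)
      then show ?thesis using fun_cong[OF e, of r] by (simp add: \<psi>_def)
    qed
    then show "y = z" using homeo_determines[of A B "H y" C "H z"] H y z BC by auto
  qed
  then have "{y \<in> range tau. tau A homeomorphic_space y} \<lesssim> (UNIV :: (rat \<Rightarrow> real) set)"
    unfolding lepoll_def by blast
  also have "\<dots> \<lesssim> (UNIV::real set)" by (rule rat_fun_lepoll)
  finally show ?thesis .
qed

theorem theorem1:
  "\<exists>\<T>. \<T> \<subseteq> coarser_Hausdorff_topologies \<and> \<T> \<approx> (UNIV :: real set set) \<and>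
       (\<forall>\<tau>\<in>\<T>. completely_normal_space \<tau> \<and> Baire_space \<tau>) \<and>
       (\<forall>\<tau>\<in>\<T>. \<forall>\<tau>'\<in>\<T>. \<tau> \<noteq> \<tau>' \<longrightarrow> \<not> \<tau> homeomorphic_space \<tau>')"
proof -
  have FP: "range tau \<approx> (UNIV :: real set set)"
    using tau_inj by (rule inj_on_image_eqpoll_self)
  obtain R where R: "R \<subseteq> range tau" "R \<approx> (UNIV :: real set set)"
    "\<forall>x\<in>R. \<forall>y\<in>R. x \<noteq> y \<longrightarrow> \<not> x homeomorphic_space y"
  proof -
    have "\<exists>R \<subseteq> range tau. R \<approx> (UNIV :: real set set) \<and> (\<forall>x\<in>R. \<forall>y\<in>R. x \<noteq> y \<longrightarrow> \<not> x homeomorphic_space y)"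
    proof (rule rep_lemma[OF FP])
      show "\<And>x y. x \<in> range tau \<Longrightarrow> y \<in> range tau \<Longrightarrow> x homeomorphic_space y \<Longrightarrow> y homeomorphic_space x"
        using homeomorphic_space_sym by blast
      show "\<And>x y z. x \<in> range tau \<Longrightarrow> y \<in> range tau \<Longrightarrow> z \<in> range tau \<Longrightarrow> x homeomorphic_space y \<Longrightarrow>
          y homeomorphic_space z \<Longrightarrow> x homeomorphic_space z"
        using homeomorphic_space_trans by blast
      show "\<And>x. x \<in> range tau \<Longrightarrow> {y \<in> range tau. x homeomorphic_space y} \<lesssim> (UNIV::real set)"
        using class_bound by blast
    qed simp
    then show ?thesis using that by blast
  qed
  show ?thesis
  proof (intro exI conjI)
    show "R \<subseteq> coarser_Hausdorff_topologies" using R(1) tau_in_L by blast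
    show "R \<approx> (UNIV :: real set set)" by (rule R(2))
    show "\<forall>\<tau>\<in>R. completely_normal_space \<tau> \<and> Baire_space \<tau>"
      using R(1) completely_normal_tau Baire_tau by blast
    show "\<forall>\<tau>\<in>R. \<forall>\<tau>'\<in>R. \<tau> \<noteq> \<tau>' \<longrightarrow> \<not> \<tau> homeomorphic_space \<tau>'" by (rule R(3))
  qed
qed

end
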